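(* Let $\Omega$ be a discrete filtered set and $(X_\Omega,\mathfrak{p}_\Omega,\underline{0}_\Omega)$ the universal $\Omega$-endless Riemann surface. For a holomorphic germ $\hat\varphi\in\mathscr{O}_{\mathbb{C},0}$, the following are equivalent: (i) $\hat\varphi$ is $\Omega$-continuable; (ii) the germ $\mathfrak{p}_\Omega^*\hat\varphi=\hat\varphi\circ\mathfrak{p}_\Omega\in\mathscr{O}_{X_\Omega,\underline0_\Omega}$ can be analytically continued along any path in $X_\Omega$; (iii) $\mathfrak{p}_\Omega^*\hat\varphi$ extends to a global holomorphic function on $X_\Omega$, i.e. to an element of $\Gamma(X_\Omega,\mathscr{O}_{X_\Omega})$.
   Context: A discrete filtered set (d.f.s.) is a family $\Omega=(\Omega_L)_{L\ge0}$ of finite subsets of $\mathbb{C}$ with $\Omega_{L_1}\subseteq\Omega_{L_2}$ for $L_1\le L_2$ and $\Omega_\delta=\emptyset$ for some $\delta>0$. Let $\mathcal{S}_\Omega=\{(\lambda,\omega)\mid\lambda\ge0,\ \omega\in\Omega_\lambda\}\subset\mathbb{R}\times\mathbb{C}$ and $\mathcal{M}_\Omega=(\mathbb{R}\times\mathbb{C})\setminus\overline{\mathcal{S}_\Omega}$. A Lipschitz path $\gamma$ with $\gamma(0)=0$ is $\Omega$-allowed if $(L(\gamma_{|t}),\gamma(t))\in\mathcal{M}_\Omega$ for all $t$ ($\gamma_{|t}$ = restriction to $[0,t]$, $L$ = length). A germ is $\Omega$-continuable if it can be analytically continued along every $\Omega$-allowed path. An $\Omega$-endless Riemann surface is a triple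 $(X,\mathfrak{p},\underline0)$ with $X$ a connected Riemann surface, $\mathfrak{p}:X\to\mathbb{C}$ a local biholomorphism, $\underline0\in\mathfrak{p}^{-1}(0)$, such that every $\Omega$-allowed path $[0,1]\to\mathbb{C}$ has a lift to $X$ starting at $\underline0$; morphisms are local biholomorphisms commuting with projections and preserving base points. The universal $\Omega$-endless Riemann surface $(X_\Omega,\mathfrak{p}_\Omega,\underline0_\Omega)$ is an initial object of this category (it exists, is unique up to isomorphism, and $X_\Omega$ is simply connected). *)

theory Defs
  imports "HOL-Complex_Analysis.Complex_Analysis"
begin

definition dfs :: "(real \<Rightarrow> complex set) \<Rightarrow> bool" where
  "dfs \<Omega> \<longleftrightarrow> (\<forall>L\<ge>0. finite (\<Omega> L))
      \<and> (\<forall>L1 L2. 0 \<le> L1 \<and> L1 \<le> L2 \<longrightarrow> \<Omega> L1 \<subseteq> \<Omega> L2)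
      \<and> (\<exists>\<delta>>0. \<Omega> \<delta> = {})"

definition S_set :: "(real \<Rightarrow> complex set) \<Rightarrow> (real \<times> complex) set" where
  "S_set \<Omega> = {(l, w). l \<ge> 0 \<and> w \<in> \<Omega> l}"

definition M_set :: "(real \<Rightarrow> complex set) \<Rightarrow> (real \<times> complex) set" where
  "M_set \<Omega> = UNIV - closure (S_set \<Omega>)"

definition path_len :: "(real \<Rightarrow> complex) \<Rightarrow> real \<Rightarrow> real \<Rightarrow> real" where
  "path_len \<gamma> a b = Sup {(\<Sum>i<n. norm (\<gamma> (s (Suc i)) - \<gamma> (s i))) | s n.
        s 0 = a \<and> s n = b \<and> (\<forall>i<n. s i \<le> s (Suc i))}"

definition allowed_path :: "(real \<Rightarrow> complex set) \<Rightarrow> (real \<Rightarrow> complex) \<Rightarrow> bool" where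
  "allowed_path \<Omega> \<gamma> \<longleftrightarrow> (\<exists>C. C-lipschitz_on {0..1} \<gamma>) \<and> \<gamma> 0 = 0
      \<and> (\<forall>t\<in>{0..1}. (path_len \<gamma> 0 t, \<gamma> t) \<in> M_set \<Omega>)"

text \<open>A connected Riemann surface X with a local biholomorphism p to C: the complex
  structure on X is the one pulled back by the local homeomorphism p.\<close>
definition riemann_surface_over_C :: "'a topology \<Rightarrow> ('a \<Rightarrow> complex) \<Rightarrow> bool" where
  "riemann_surface_over_C X p \<longleftrightarrow> Hausdorff_space X \<and> connected_space X
     \<and> topspace X \<noteq> {}
     \<and> (\<forall>x\<in>topspace X. \<exists>U. openin X U \<and> x \<in> U \<and> open (p ` U)
            \<and> homeomorphic_map (subtopology X U) (top_of_set (p ` U)) p)"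

definition holo_on_surface :: "'a topology \<Rightarrow> ('a \<Rightarrow> complex) \<Rightarrow> 'a set \<Rightarrow> ('a \<Rightarrow> complex) \<Rightarrow> bool" where
  "holo_on_surface X p W f \<longleftrightarrow> openin X W \<and>
     (\<forall>x\<in>W. \<exists>U. openin X U \<and> x \<in> U \<and> U \<subseteq> W \<and> open (p ` U) \<and> inj_on p U
            \<and> homeomorphic_map (subtopology X U) (top_of_set (p ` U)) p
            \<and> (f \<circ> inv_into U p) holomorphic_on (p ` U))"

definition same_germ :: "'a topology \<Rightarrow> 'a \<Rightarrow> ('a \<Rightarrow> complex) \<Rightarrow> ('a \<Rightarrow> complex) \<Rightarrow> bool" where
  "same_germ X x f g \<longleftrightarrow> (\<exists>W. openin X W \<and> x \<in> W \<and> (\<forall>y\<in>W. f y = g y))"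

definition continuable_along :: "'a topology \<Rightarrow> ('a \<Rightarrow> complex) \<Rightarrow> ('a \<Rightarrow> complex) \<Rightarrow> (real \<Rightarrow> 'a) \<Rightarrow> bool" where
  "continuable_along X p f0 \<Gamma> \<longleftrightarrow> (\<exists>U F.
      (\<forall>t\<in>{0..1}. \<Gamma> t \<in> U t \<and> holo_on_surface X p (U t) (F t))
    \<and> same_germ X (\<Gamma> 0) (F 0) f0
    \<and> (\<forall>t\<in>{0..1}. \<exists>\<epsilon>>0. \<forall>s\<in>{0..1}. \<bar>s - t\<bar> < \<epsilon> \<longrightarrow>
           \<Gamma> s \<in> U t \<and> same_germ X (\<Gamma> s) (F s) (F t)))"

text \<open>A germ at 0 in C (represented by a function holomorphic near 0) is Omega-continuable.\<close>
definition omega_continuable :: "(real \<Rightarrow> complex set) \<Rightarrow> (complex \<Rightarrow> complex) \<Rightarrow> bool" where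
  "omega_continuable \<Omega> \<phi> \<longleftrightarrow>
     (\<forall>\<gamma>. allowed_path \<Omega> \<gamma> \<longrightarrow> continuable_along euclidean id \<phi> \<gamma>)"

definition endless_surface :: "(real \<Rightarrow> complex set) \<Rightarrow> 'a topology \<Rightarrow> ('a \<Rightarrow> complex) \<Rightarrow> 'a \<Rightarrow> bool" where
  "endless_surface \<Omega> X p o0 \<longleftrightarrow> riemann_surface_over_C X p \<and> o0 \<in> topspace X \<and> p o0 = 0
     \<and> (\<forall>\<gamma>. allowed_path \<Omega> \<gamma> \<longrightarrow>
          (\<exists>\<Gamma>. continuous_map (top_of_set {0..1}) X \<Gamma> \<and> \<Gamma> 0 = o0
               \<and> (\<forall>t\<in>{0..1}. p (\<Gamma> t) = \<gamma> t)))"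

text \<open>Morphisms: maps commuting with projections and preserving base points which are
  local biholomorphisms (local homeomorphisms that are holomorphic in the charts p, q,
  i.e. whose chart expression q \<circ> f \<circ> p^-1 is holomorphic).\<close>
definition surface_morphism :: "'a topology \<Rightarrow> ('a \<Rightarrow> complex) \<Rightarrow> 'a \<Rightarrow> 'b topology \<Rightarrow> ('b \<Rightarrow> complex) \<Rightarrow> 'b \<Rightarrow> ('a \<Rightarrow> 'b) \<Rightarrow> bool" where
  "surface_morphism X p o0 Y q o1 f \<longleftrightarrow> continuous_map X Y f
     \<and> (\<forall>x\<in>topspace X. q (f x) = p x) \<and> f o0 = o1
     \<and> (\<forall>x\<in>topspace X. \<exists>U. openin X U \<and> x \<in> U \<and> openin Y (f ` U)
            \<and> homeomorphic_map (subtopology X U) (subtopology Y (f ` U)) f)"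

text \<open>Test objects are all Omega-endless
  Riemann surfaces whose underlying set is a subset of the type complex; since every
  connected Riemann surface has cardinality at most that of C, every Omega-endless
  Riemann surface is isomorphic to one of these, so this is initiality in the full category.\<close>
definition universal_endless :: "(real \<Rightarrow> complex set) \<Rightarrow> 'a topology \<Rightarrow> ('a \<Rightarrow> complex) \<Rightarrow> 'a \<Rightarrow> bool" where
  "universal_endless \<Omega> X p o0 \<longleftrightarrow> endless_surface \<Omega> X p o0
     \<and> (\<forall>(Y::complex topology) q o1. endless_surface \<Omega> Y q o1 \<longrightarrow>
          (\<exists>f. surface_morphism X p o0 Y q o1 f
              \<and> (\<forall>g. surface_morphism X p o0 Y q o1 g \<longrightarrow> (\<forall>x\<in>topspace X. g x = f x))))"

end

theory Submission
  imports Defs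
begin

lemma exists_enc: "\<exists>enc :: complex \<times> (nat \<Rightarrow> complex) \<Rightarrow> complex. inj enc"
proof -
  have "\<exists>f g. (\<forall>x\<in>(UNIV::nat set set). f x \<in> (UNIV::real set) \<and> g (f x) = x) \<and> (\<forall>y\<in>(UNIV::real set). g y \<in> (UNIV::nat set set) \<and> f (g y) = y)"
    using nat_sets_eqpoll_reals unfolding eqpoll_iff_bijections .
  then obtain f :: "nat set \<Rightarrow> real" and g where fg0: "\<forall>x\<in>UNIV. f x \<in> UNIV \<and> g (f x) = x" "\<forall>y\<in>UNIV. g y \<in> UNIV \<and> f (g y) = y"
    by (elim exE conjE)
  have fg: "\<forall>x. g (f x) = x" "\<forall>y. f (g y) = y" using fg0 by simp_all
  define ps :: "nat set \<Rightarrow> nat set \<Rightarrow> nat set" where "ps A B = (\<lambda>n. 2*n) ` A \<union> (\<lambda>n. 2*n+1) ` B" for A B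
  have ps: "ps A B = ps A' B' \<Longrightarrow> A = A' \<and> B = B'" for A B A' B'
  proof -
    assume h: "ps A B = ps A' B'"
    have "n \<in> A \<longleftrightarrow> 2*n \<in> ps A B" "n \<in> B \<longleftrightarrow> 2*n+1 \<in> ps A B"
         "n \<in> A' \<longleftrightarrow> 2*n \<in> ps A' B'" "n \<in> B' \<longleftrightarrow> 2*n+1 \<in> ps A' B'" for n A B A' B'
      unfolding ps_def by auto presburger+
    note mem = this
    have "A = A'"
    proof (rule set_eqI)
      fix n show "n \<in> A \<longleftrightarrow> n \<in> A'" using mem(1)[of n A B] mem(3)[of n A' B'] h by simp
    qed
    moreover have "B = B'"
    proof (rule set_eqI)
      fix n show "n \<in> B \<longleftrightarrow> n \<in> B'" using mem(2)[of n B A] mem(4)[of n B' A'] h by simp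
    qed
    ultimately show ?thesis by simp
  qed
  define cn :: "complex \<Rightarrow> nat set" where "cn z = ps (g (Re z)) (g (Im z))" for z
  have cn: "inj cn"
    by (rule injI) (metis cn_def ps fg complex_eqI)
  define sq :: "(nat \<Rightarrow> nat set) \<Rightarrow> nat set" where "sq h = {prod_encode (n,k) | n k. k \<in> h n}" for h
  have sq: "inj sq"
  proof (rule injI)
    fix h h' assume "sq h = sq h'"
    then have "k \<in> h n \<longleftrightarrow> k \<in> h' n" for n k
      unfolding sq_def by (smt (verit) mem_Collect_eq prod_encode_eq prod.inject)
    then show "h = h'" by blast
  qed
  define enc where "enc p = complex_of_real (f (ps (cn (fst p)) (sq (cn \<circ> snd p))))" for p
  have "inj enc"
  proof (rule injI)
    fix a b assume "enc a = enc b"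
    then have "f (ps (cn (fst a)) (sq (cn \<circ> snd a))) = f (ps (cn (fst b)) (sq (cn \<circ> snd b)))"
      unfolding enc_def by simp
    then have "ps (cn (fst a)) (sq (cn \<circ> snd a)) = ps (cn (fst b)) (sq (cn \<circ> snd b))"
      by (metis fg(1))
    then have e: "cn (fst a) = cn (fst b) \<and> sq (cn \<circ> snd a) = sq (cn \<circ> snd b)" by (rule ps)
    have e2: "cn \<circ> snd a = cn \<circ> snd b" using injD[OF sq] e by blast
    have "fst a = fst b" using injD[OF cn] e by blast
    moreover have "snd a = snd b"
    proof
      fix n have "cn (snd a n) = cn (snd b n)" using e2 unfolding comp_def by (rule fun_cong)
      then show "snd a n = snd b n" by (rule injD[OF cn])
    qed
    ultimately show "a = b" by (simp add: prod_eq_iff)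
  qed
  then show ?thesis by blast
qed

definition enc :: "complex \<times> (nat \<Rightarrow> complex) \<Rightarrow> complex" where
  "enc = (SOME e. inj e)"

lemma inj_enc: "inj enc"
  unfolding enc_def using exists_enc by (rule someI_ex)

definition germ :: "complex \<Rightarrow> (complex \<Rightarrow> complex) \<Rightarrow> complex" where
  "germ z h = enc (z, \<lambda>n. (deriv ^^ n) h z)"

definition gpt :: "complex \<Rightarrow> complex" where "gpt y = fst (inv enc y)"
definition gval :: "complex \<Rightarrow> complex" where "gval y = snd (inv enc y) 0"

lemma gpt_germ[simp]: "gpt (germ z h) = z"
  unfolding gpt_def germ_def using inj_enc by simp

lemma gval_germ[simp]: "gval (germ z h) = h z"
  unfolding gval_def germ_def using inj_enc by simp

lemma germ_eq_iff: "germ z h = germ w k \<longleftrightarrow> z = w \<and> (\<forall>n. (deriv ^^ n) h z = (deriv ^^ n) k z)"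
  unfolding germ_def using inj_enc by (auto dest: injD simp: fun_eq_iff)

lemma germ_cong: "eventually (\<lambda>x. h x = k x) (nhds z) \<Longrightarrow> germ z h = germ z k"
  unfolding germ_eq_iff by (auto intro: higher_deriv_cong_ev)

lemma germ_cong_open: "open W \<Longrightarrow> z \<in> W \<Longrightarrow> (\<And>y. y \<in> W \<Longrightarrow> h y = k y) \<Longrightarrow> germ z h = germ z k"
  by (rule germ_cong) (auto simp: eventually_nhds)

lemma germ_eq_local:
  assumes "open A" "z \<in> A" "h holomorphic_on A" "open B" "z \<in> B" "k holomorphic_on B"
    and "germ z h = germ z k"
  shows "\<exists>e>0. ball z e \<subseteq> A \<inter> B \<and> (\<forall>w\<in>ball z e. h w = k w)"
proof -
  obtain e where e: "e > 0" "ball z e \<subseteq> A \<inter> B"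
    using assms by (meson open_Int IntI openE)
  have hb: "h holomorphic_on ball z e" "k holomorphic_on ball z e"
    using assms e by (auto intro: holomorphic_on_subset)
  have dd: "\<And>n. (deriv ^^ n) h z = (deriv ^^ n) k z"
    using assms(7) unfolding germ_eq_iff by blast
  have "h w = k w" if "w \<in> ball z e" for w
    using holomorphic_fun_eq_on_ball[OF hb that dd] .
  then show ?thesis using e by blast
qed


definition bas :: "(complex \<Rightarrow> complex) \<Rightarrow> complex set \<Rightarrow> complex set" where
  "bas h D = (\<lambda>w. germ w h) ` D"

definition isopenE :: "complex set \<Rightarrow> bool" where
  "isopenE S \<longleftrightarrow> (\<forall>y\<in>S. \<exists>h D. open D \<and> h holomorphic_on D \<and> y \<in> bas h D \<and> bas h D \<subseteq> S)"

lemma istopology_isopenE: "istopology isopenE"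
  unfolding istopology_def
proof (intro conjI allI impI)
  fix S T assume S: "isopenE S" and T: "isopenE T"
  show "isopenE (S \<inter> T)"
    unfolding isopenE_def
  proof
    fix y assume y: "y \<in> S \<inter> T"
    obtain h1 D1 where 1: "open D1" "h1 holomorphic_on D1" "y \<in> bas h1 D1" "bas h1 D1 \<subseteq> S"
      using S y unfolding isopenE_def by blast
    obtain h2 D2 where 2: "open D2" "h2 holomorphic_on D2" "y \<in> bas h2 D2" "bas h2 D2 \<subseteq> T"
      using T y unfolding isopenE_def by blast
    obtain w1 where w1: "w1 \<in> D1" "y = germ w1 h1" using 1 unfolding bas_def by blast
    obtain w2 where w2: "w2 \<in> D2" "y = germ w2 h2" using 2 unfolding bas_def by blast
    have "w1 = w2" using w1 w2 by (metis gpt_germ)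
    then obtain e where e: "e > 0" "ball w1 e \<subseteq> D1 \<inter> D2" "\<forall>w\<in>ball w1 e. h1 w = h2 w"
      using germ_eq_local[OF 1(1) w1(1) 1(2) 2(1) _ 2(2)] w1 w2 by metis
    have "bas h1 (ball w1 e) \<subseteq> S \<inter> T"
    proof
      fix x assume "x \<in> bas h1 (ball w1 e)"
      then obtain v where v: "v \<in> ball w1 e" "x = germ v h1" unfolding bas_def by blast
      have "germ v h1 = germ v h2"
        by (rule germ_cong_open[of "ball w1 e"]) (use v e in auto)
      then show "x \<in> S \<inter> T" using v e 1 2 unfolding bas_def by blast
    qed
    moreover have "y \<in> bas h1 (ball w1 e)" using w1 e unfolding bas_def by auto
    moreover have "h1 holomorphic_on ball w1 e" using 1 e by (auto intro: holomorphic_on_subset)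
    ultimately show "\<exists>h D. open D \<and> h holomorphic_on D \<and> y \<in> bas h D \<and> bas h D \<subseteq> S \<inter> T"
      by blast
  qed
next
  fix K assume "\<forall>S\<in>K. isopenE S"
  then show "isopenE (\<Union>K)" unfolding isopenE_def by (meson Union_iff subset_iff)
qed

definition E :: "complex topology" where "E = topology isopenE"

lemma openin_E: "openin E S \<longleftrightarrow> isopenE S"
  unfolding E_def using istopology_isopenE by (simp add: topology_inverse')

lemma openin_bas: "open D \<Longrightarrow> h holomorphic_on D \<Longrightarrow> openin E (bas h D)"
  unfolding openin_E isopenE_def by blast

lemma topspace_E: "topspace E = {y. \<exists>h D. open D \<and> h holomorphic_on D \<and> y \<in> bas h D}"
proof -
  have "topspace E = \<Union>{S. isopenE S}" unfolding topspace_def openin_E by simp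
  also have "\<dots> = {y. \<exists>h D. open D \<and> h holomorphic_on D \<and> y \<in> bas h D}"
  proof
    show "\<Union>{S. isopenE S} \<subseteq> {y. \<exists>h D. open D \<and> h holomorphic_on D \<and> y \<in> bas h D}"
      unfolding isopenE_def by blast
    show "{y. \<exists>h D. open D \<and> h holomorphic_on D \<and> y \<in> bas h D} \<subseteq> \<Union>{S. isopenE S}"
      using openin_bas unfolding openin_E by blast
  qed
  finally show ?thesis .
qed

lemma germ_in_E: "open D \<Longrightarrow> h holomorphic_on D \<Longrightarrow> z \<in> D \<Longrightarrow> germ z h \<in> topspace E"
  unfolding topspace_E bas_def by blast

lemma bas_subset_E: "open D \<Longrightarrow> h holomorphic_on D \<Longrightarrow> bas h D \<subseteq> topspace E"
  using germ_in_E unfolding bas_def by blast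

lemma continuous_germ:
  assumes "open D" "h holomorphic_on D"
  shows "continuous_map (top_of_set D) E (\<lambda>w. germ w h)"
  unfolding continuous_map_openin_preimage_eq
proof (intro conjI allI impI)
  show "(\<lambda>w. germ w h) \<in> topspace (top_of_set D) \<rightarrow> topspace E"
    using germ_in_E[OF assms] by auto
  fix S assume S: "openin E S"
  let ?P = "topspace (top_of_set D) \<inter> (\<lambda>w. germ w h) -` S"
  have "open ?P"
  proof (rule openI)
    fix w assume w: "w \<in> ?P"
    then have wD: "w \<in> D" and wS: "germ w h \<in> S" by auto
    obtain h' D' where 1: "open D'" "h' holomorphic_on D'" "germ w h \<in> bas h' D'" "bas h' D' \<subseteq> S"
      using S wS unfolding openin_E isopenE_def by blast
    obtain w' where w': "w' \<in> D'" "germ w h = germ w' h'" using 1 unfolding bas_def by blast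
    have "w' = w" using w' by (metis gpt_germ)
    then obtain e where e: "e > 0" "ball w e \<subseteq> D \<inter> D'" "\<forall>v\<in>ball w e. h v = h' v"
      using germ_eq_local[OF assms(1) wD assms(2) 1(1) _ 1(2)] w' by metis
    have "ball w e \<subseteq> ?P"
    proof
      fix v assume v: "v \<in> ball w e"
      have "germ v h = germ v h'"
        by (rule germ_cong_open[of "ball w e"]) (use v e in auto)
      moreover have "germ v h' \<in> S" using 1(4) v e(2) unfolding bas_def by blast
      ultimately show "v \<in> ?P" using v e(2) by auto
    qed
    then show "\<exists>\<epsilon>>0. ball w \<epsilon> \<subseteq> ?P" using e(1) by blast
  qed
  then show "openin (top_of_set D) ?P" unfolding openin_open by (intro exI[of _ ?P]) auto
qed

lemma continuous_gpt: "continuous_map E euclidean gpt"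
  unfolding continuous_map_openin_preimage_eq
proof (intro conjI allI impI)
  show "gpt \<in> topspace E \<rightarrow> topspace euclidean" by simp
  fix V :: "complex set" assume "openin euclidean V"
  then have V: "open V" by simp
  show "openin E (topspace E \<inter> gpt -` V)"
    unfolding openin_E isopenE_def
  proof
    fix y assume y: "y \<in> topspace E \<inter> gpt -` V"
    then obtain h D where 1: "open D" "h holomorphic_on D" "y \<in> bas h D"
      unfolding topspace_E by blast
    then obtain z where z: "z \<in> D" "y = germ z h" unfolding bas_def by blast
    have "open (D \<inter> V)" "h holomorphic_on D \<inter> V" "y \<in> bas h (D \<inter> V)"
      using 1 V y z by (auto simp: bas_def intro: holomorphic_on_subset)
    moreover have "bas h (D \<inter> V) \<subseteq> topspace E \<inter> gpt -` V"
      using bas_subset_E[OF 1(1,2)] unfolding bas_def by auto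
    ultimately show "\<exists>h D. open D \<and> h holomorphic_on D \<and> y \<in> bas h D \<and> bas h D \<subseteq> topspace E \<inter> gpt -` V"
      by blast
  qed
qed

lemma homeo_bas:
  assumes "open D" "h holomorphic_on D"
  shows "homeomorphic_map (subtopology E (bas h D)) (top_of_set D) gpt"
  unfolding homeomorphic_map_maps homeomorphic_maps_def
proof (intro exI[of _ "\<lambda>w. germ w h"] conjI ballI)
  have ts: "topspace (subtopology E (bas h D)) = bas h D"
    using bas_subset_E[OF assms] by auto
  show "continuous_map (subtopology E (bas h D)) (top_of_set D) gpt"
    by (rule continuous_map_into_subtopology)
       (auto simp: ts bas_def intro: continuous_map_from_subtopology continuous_gpt)
  show "continuous_map (top_of_set D) (subtopology E (bas h D)) (\<lambda>w. germ w h)"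
    by (rule continuous_map_into_subtopology) (auto simp: bas_def intro: continuous_germ[OF assms])
  show "germ (gpt x) h = x" if "x \<in> topspace (subtopology E (bas h D))" for x
    using that ts unfolding bas_def by auto
  show "gpt (germ y h) = y" if "y \<in> topspace (top_of_set D)" for y by simp
qed


lemma Hausdorff_E: "Hausdorff_space E"
  unfolding Hausdorff_space_def
proof (intro allI impI, elim conjE)
  fix y1 y2 assume y1: "y1 \<in> topspace E" and y2: "y2 \<in> topspace E" and ne: "y1 \<noteq> y2"
  obtain h1 D1 where 1: "open D1" "h1 holomorphic_on D1" "y1 \<in> bas h1 D1"
    using y1 unfolding topspace_E by blast
  obtain h2 D2 where 2: "open D2" "h2 holomorphic_on D2" "y2 \<in> bas h2 D2"
    using y2 unfolding topspace_E by blast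
  obtain z1 where z1: "z1 \<in> D1" "y1 = germ z1 h1" using 1 unfolding bas_def by blast
  obtain z2 where z2: "z2 \<in> D2" "y2 = germ z2 h2" using 2 unfolding bas_def by blast
  show "\<exists>U V. openin E U \<and> openin E V \<and> y1 \<in> U \<and> y2 \<in> V \<and> disjnt U V"
  proof (cases "z1 = z2")
    case False
    define e where "e = dist z1 z2 / 2"
    have e: "e > 0" using False by (simp add: e_def)
    have d: "ball z1 e \<inter> ball z2 e = {}"
      by (rule disjoint_ballI) (simp add: e_def)
    let ?U = "bas h1 (D1 \<inter> ball z1 e)" and ?V = "bas h2 (D2 \<inter> ball z2 e)"
    have "openin E ?U" "openin E ?V"
      using 1 2 by (auto intro!: openin_bas intro: holomorphic_on_subset)
    moreover have "y1 \<in> ?U" "y2 \<in> ?V" using z1 z2 e unfolding bas_def by auto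
    moreover have "disjnt ?U ?V"
    proof (rule ccontr)
      assume "\<not> disjnt ?U ?V"
      then obtain w w' where w: "w \<in> ball z1 e" "w' \<in> ball z2 e" "germ w h1 = germ w' h2"
        unfolding disjnt_def bas_def by blast
      then have "w = w'" by (metis gpt_germ)
      then show False using w d by blast
    qed
    ultimately show ?thesis by blast
  next
    case True
    then obtain e where e: "e > 0" "ball z1 e \<subseteq> D1 \<inter> D2"
      using 1 2 z1 z2 by (meson open_Int IntI openE)
    let ?U = "bas h1 (ball z1 e)" and ?V = "bas h2 (ball z1 e)"
    have hb: "h1 holomorphic_on ball z1 e" "h2 holomorphic_on ball z1 e"
      using 1 2 e by (auto intro: holomorphic_on_subset)
    have "openin E ?U" "openin E ?V" using hb by (auto intro!: openin_bas)
    moreover have "y1 \<in> ?U" "y2 \<in> ?V" using z1 z2 e True unfolding bas_def by auto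
    moreover have "disjnt ?U ?V"
    proof (rule ccontr)
      assume "\<not> disjnt ?U ?V"
      then obtain w w' where w: "w \<in> ball z1 e" "w' \<in> ball z1 e" "germ w h1 = germ w' h2"
        unfolding disjnt_def bas_def by blast
      then have "w' = w" by (metis gpt_germ)
      then obtain d where d: "d > 0" "ball w d \<subseteq> ball z1 e \<inter> ball z1 e" "\<forall>v\<in>ball w d. h1 v = h2 v"
        using germ_eq_local[OF open_ball w(1) hb(1) open_ball w(1) hb(2)] w by metis
      have "h1 v = h2 v" if "v \<in> ball z1 e" for v
        by (rule analytic_continuation_open[of "ball w d" "ball z1 e"])
           (use d hb that in auto)
      then have "germ z1 h1 = germ z1 h2"
        using germ_cong_open[of "ball z1 e" z1 h1 h2] e by auto
      then show False using ne z1 z2 True by simp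
    qed
    ultimately show ?thesis by blast
  qed
qed

lemma connected_bas: "h holomorphic_on ball z e \<Longrightarrow> connectedin E (bas h (ball z e))"
  unfolding bas_def
  by (rule connectedin_continuous_map_image[OF continuous_germ]) auto


lemma E_point:
  assumes "x \<in> topspace E"
  obtains h e where "e > 0" "h holomorphic_on ball (gpt x) e" "x = germ (gpt x) h"
proof -
  obtain h D where 1: "open D" "h holomorphic_on D" "x \<in> bas h D"
    using assms unfolding topspace_E by blast
  then obtain z where z: "z \<in> D" "x = germ z h" unfolding bas_def by blast
  then obtain e where "e > 0" "ball z e \<subseteq> D" using 1 openE by blast
  then show ?thesis using that[of e h] 1 z by (auto intro: holomorphic_on_subset)
qed

lemma bas_in_comp:
  assumes "x \<in> connected_component_of_set E y" "x \<in> bas h (ball z e)" "h holomorphic_on ball z e"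
  shows "bas h (ball z e) \<subseteq> connected_component_of_set E y"
proof -
  have "bas h (ball z e) \<subseteq> connected_component_of_set E x"
    by (rule connected_component_of_maximal[OF connected_bas[OF assms(3)] assms(2)])
  also have "\<dots> = connected_component_of_set E y"
    using assms(1) by (metis connected_component_of_equiv mem_Collect_eq)
  finally show ?thesis .
qed

lemma comp_open: "openin E (connected_component_of_set E y)"
proof (subst openin_subopen, intro ballI)
  fix x assume x: "x \<in> connected_component_of_set E y"
  then have "x \<in> topspace E" using connected_component_of_subset_topspace[of E y] by blast
  then obtain h e where he: "e > 0" "h holomorphic_on ball (gpt x) e" "x = germ (gpt x) h"
    by (rule E_point)
  have xb: "x \<in> bas h (ball (gpt x) e)" using he unfolding bas_def by force
  show "\<exists>T. openin E T \<and> x \<in> T \<and> T \<subseteq> connected_component_of_set E y"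
    using bas_in_comp[OF x xb he(2)] openin_bas[OF open_ball he(2)] xb by blast
qed

lemma rs_comp:
  assumes "y \<in> topspace E"
  shows "riemann_surface_over_C (subtopology E (connected_component_of_set E y)) gpt"
proof -
  let ?C = "connected_component_of_set E y"
  have Csub: "?C \<subseteq> topspace E" by (rule connected_component_of_subset_topspace)
  have ts: "topspace (subtopology E ?C) = ?C" using Csub by auto
  show ?thesis
    unfolding riemann_surface_over_C_def
  proof (intro conjI ballI)
    show "Hausdorff_space (subtopology E ?C)" by (simp add: Hausdorff_E Hausdorff_space_subtopology)
    show "connected_space (subtopology E ?C)"
      using connectedin_connected_component_of[of E y] by (simp add: connectedin_def)
    show "topspace (subtopology E ?C) \<noteq> {}"
      using assms ts connected_component_of_refl by fastforce
    fix x assume "x \<in> topspace (subtopology E ?C)"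
    then have x: "x \<in> ?C" using ts by simp
    then have "x \<in> topspace E" using Csub by blast
    then obtain h e where he: "e > 0" "h holomorphic_on ball (gpt x) e" "x = germ (gpt x) h"
      by (rule E_point)
    let ?U = "bas h (ball (gpt x) e)"
    have xb: "x \<in> ?U" using he unfolding bas_def by force
    have UC: "?U \<subseteq> ?C" by (rule bas_in_comp[OF x xb he(2)])
    have "openin (subtopology E ?C) ?U"
      using openin_bas[OF open_ball he(2)] UC by (subst openin_subtopology) blast
    moreover have img: "gpt ` ?U = ball (gpt x) e" unfolding bas_def by (simp add: image_image)
    moreover have "homeomorphic_map (subtopology (subtopology E ?C) ?U) (top_of_set (gpt ` ?U)) gpt"
      using homeo_bas[OF open_ball he(2)] UC img by (simp add: subtopology_subtopology inf.absorb2)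
    ultimately show "\<exists>U. openin (subtopology E ?C) U \<and> x \<in> U \<and> open (gpt ` U) \<and>
         homeomorphic_map (subtopology (subtopology E ?C) U) (top_of_set (gpt ` U)) gpt"
      using xb by (metis open_ball)
  qed
qed


lemma holo_euclid: "holo_on_surface euclidean id A G \<longleftrightarrow> open A \<and> G holomorphic_on A"
proof
  assume h: "holo_on_surface euclidean id A G"
  then have A: "open A" unfolding holo_on_surface_def by simp
  have "G field_differentiable at x" if x: "x \<in> A" for x
  proof -
    obtain U where U: "openin euclidean U" "x \<in> U" "U \<subseteq> A" "(G \<circ> inv_into U id) holomorphic_on (id ` U)"
      using h x unfolding holo_on_surface_def by blast
    have "G holomorphic_on U"
      by (rule holomorphic_transform[OF U(4)[simplified]]) (simp add: inv_into_f_eq)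
    then show ?thesis using U holomorphic_on_imp_differentiable_at by auto
  qed
  then show "open A \<and> G holomorphic_on A" using A by (simp add: holomorphic_on_open field_differentiable_def)
next
  assume h: "open A \<and> G holomorphic_on A"
  have "(G \<circ> inv_into A id) holomorphic_on A"
    by (rule holomorphic_transform[OF conjunct2[OF h]]) (simp add: inv_into_f_eq)
  then show "holo_on_surface euclidean id A G"
    unfolding holo_on_surface_def using h by (auto intro!: exI[of _ A])
qed

lemma same_germ_euclid: "same_germ euclidean z f g \<Longrightarrow> germ z f = germ z g"
  unfolding same_germ_def by (auto intro: germ_cong_open)

lemma lift_continuous:
  fixes \<gamma> :: "real \<Rightarrow> complex"
  assumes cont: "continuous_on {0..1} \<gamma>"
    and h: "\<forall>t\<in>{0..1}. \<gamma> t \<in> U t \<and> open (U t) \<and> F t holomorphic_on U t"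
    and loc: "\<forall>t\<in>{0..1}. \<exists>\<epsilon>>0. \<forall>s\<in>{0..1}. \<bar>s - t\<bar> < \<epsilon> \<longrightarrow>
           \<gamma> s \<in> U t \<and> same_germ euclidean (\<gamma> s) (F s) (F t)"
  shows "continuous_map (top_of_set {0..1}) E (\<lambda>t. germ (\<gamma> t) (F t))"
  unfolding continuous_map_openin_preimage_eq
proof (intro conjI allI impI)
  show "(\<lambda>t. germ (\<gamma> t) (F t)) \<in> topspace (top_of_set {0..1}) \<rightarrow> topspace E"
    using h germ_in_E by auto
  fix S assume S: "openin E S"
  let ?P = "topspace (top_of_set {0..1::real}) \<inter> (\<lambda>t. germ (\<gamma> t) (F t)) -` S"
  show "openin (top_of_set {0..1}) ?P"
  proof (subst openin_subopen, intro ballI)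
    fix t assume t: "t \<in> ?P"
    then have t01: "t \<in> {0..1}" and tS: "germ (\<gamma> t) (F t) \<in> S" by auto
    obtain h' D' where 1: "open D'" "h' holomorphic_on D'" "germ (\<gamma> t) (F t) \<in> bas h' D'" "bas h' D' \<subseteq> S"
      using S tS unfolding openin_E isopenE_def by blast
    obtain w' where w': "w' \<in> D'" "germ (\<gamma> t) (F t) = germ w' h'" using 1 unfolding bas_def by blast
    have "w' = \<gamma> t" using w' by (metis gpt_germ)
    then obtain e where e: "e > 0" "ball (\<gamma> t) e \<subseteq> U t \<inter> D'" "\<forall>v\<in>ball (\<gamma> t) e. F t v = h' v"
      using germ_eq_local[of "U t" "\<gamma> t" "F t" D' h'] h t01 1 w' by metis
    obtain d where d: "d > 0" "\<forall>s\<in>{0..1}. dist s t < d \<longrightarrow> dist (\<gamma> s) (\<gamma> t) < e"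
      using cont t01 e(1) unfolding continuous_on_iff by blast
    obtain \<epsilon> where eps: "\<epsilon> > 0" "\<forall>s\<in>{0..1}. \<bar>s - t\<bar> < \<epsilon> \<longrightarrow>
           \<gamma> s \<in> U t \<and> same_germ euclidean (\<gamma> s) (F s) (F t)"
      using loc t01 by blast
    let ?T = "{0..1} \<inter> ball t (min d \<epsilon>)"
    have "openin (top_of_set {0..1}) ?T" by (simp add: openin_open_Int)
    moreover have "t \<in> ?T" using t01 d eps by auto
    moreover have "?T \<subseteq> ?P"
    proof
      fix s assume s: "s \<in> ?T"
      then have s01: "s \<in> {0..1}" and sd: "dist s t < d" "\<bar>s - t\<bar> < \<epsilon>"
        by (auto simp: dist_real_def abs_minus_commute)
      have gs: "\<gamma> s \<in> ball (\<gamma> t) e" using d s01 sd by (simp add: dist_commute)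
      have "germ (\<gamma> s) (F s) = germ (\<gamma> s) (F t)"
        using eps s01 sd same_germ_euclid by blast
      also have "\<dots> = germ (\<gamma> s) h'"
        by (rule germ_cong_open[of "ball (\<gamma> t) e"]) (use gs e in auto)
      moreover have "\<gamma> s \<in> D'" using gs e(2) by blast
      moreover then have "germ (\<gamma> s) h' \<in> S" using 1(4) unfolding bas_def by blast
      ultimately show "s \<in> ?P" using s01 by auto
    qed
    ultimately show "\<exists>T. openin (top_of_set {0..1}) T \<and> t \<in> T \<and> T \<subseteq> ?P" by blast
  qed
qed


lemma endless_of_cont:
  assumes r: "r > 0" "\<phi> holomorphic_on ball 0 r" and oc: "omega_continuable \<Omega> \<phi>"
  shows "endless_surface \<Omega> (subtopology E (connected_component_of_set E (germ 0 \<phi>))) gpt (germ 0 \<phi>)"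
proof -
  let ?y0 = "germ 0 \<phi>"
  let ?C = "connected_component_of_set E ?y0"
  have y0E: "?y0 \<in> topspace E" using r by (intro germ_in_E[of "ball 0 r"]) auto
  have y0C: "?y0 \<in> ?C" using y0E connected_component_of_refl by fastforce
  show ?thesis
    unfolding endless_surface_def
  proof (intro conjI allI impI)
    show "riemann_surface_over_C (subtopology E ?C) gpt" by (rule rs_comp[OF y0E])
    show "?y0 \<in> topspace (subtopology E ?C)" using y0C y0E by simp
    show "gpt ?y0 = 0" by simp
    fix \<gamma> assume al: "allowed_path \<Omega> \<gamma>"
    then have cont: "continuous_on {0..1} \<gamma>" and g0: "\<gamma> 0 = 0"
      unfolding allowed_path_def by (auto intro: lipschitz_on_continuous_on)
    obtain U F where UF: "\<forall>t\<in>{0..1}. \<gamma> t \<in> U t \<and> holo_on_surface euclidean id (U t) (F t)"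
      "same_germ euclidean (\<gamma> 0) (F 0) \<phi>"
      "\<forall>t\<in>{0..1}. \<exists>\<epsilon>>0. \<forall>s\<in>{0..1}. \<bar>s - t\<bar> < \<epsilon> \<longrightarrow>
           \<gamma> s \<in> U t \<and> same_germ euclidean (\<gamma> s) (F s) (F t)"
      using oc al unfolding omega_continuable_def continuable_along_def by blast
    have h: "\<forall>t\<in>{0..1}. \<gamma> t \<in> U t \<and> open (U t) \<and> F t holomorphic_on U t"
      using UF(1) holo_euclid by blast
    let ?G = "\<lambda>t. germ (\<gamma> t) (F t)"
    have cm: "continuous_map (top_of_set {0..1}) E ?G"
      by (rule lift_continuous[OF cont h UF(3)])
    have G0: "?G 0 = ?y0" using same_germ_euclid[OF UF(2)] g0 by simp
    have conn: "connectedin E (?G ` {0..1})"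
      by (rule connectedin_continuous_map_image[OF cm]) auto
    have y0G: "?y0 \<in> ?G ` {0..1}" by (rule image_eqI[of _ _ 0]) (use G0 in auto)
    have img: "?G ` {0..1} \<subseteq> ?C"
      by (rule connected_component_of_maximal[OF conn y0G])
    have "continuous_map (top_of_set {0..1}) (subtopology E ?C) ?G"
      by (rule continuous_map_into_subtopology[OF cm]) (use img in auto)
    then show "\<exists>\<Gamma>. continuous_map (top_of_set {0..1}) (subtopology E ?C) \<Gamma> \<and> \<Gamma> 0 = ?y0 \<and>
                 (\<forall>t\<in>{0..1}. gpt (\<Gamma> t) = \<gamma> t)"
      using G0 by (intro exI[of _ ?G]) auto
  qed
qed


lemma i_to_iii:
  assumes u: "universal_endless \<Omega> X p o0"
    and r: "r > 0" "\<phi> holomorphic_on ball 0 r" and oc: "omega_continuable \<Omega> \<phi>"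
  shows "\<exists>F. holo_on_surface X p (topspace X) F \<and> same_germ X o0 F (\<phi> \<circ> p)"
proof -
  define y0 where "y0 = germ 0 \<phi>"
  define C where "C = connected_component_of_set E y0"
  define Y where "Y = subtopology E C"
  have y0E: "y0 \<in> topspace E" unfolding y0_def using r by (intro germ_in_E[of "ball 0 r"]) auto
  have y0C: "y0 \<in> C" unfolding C_def using y0E connected_component_of_refl by fastforce
  have CE: "C \<subseteq> topspace E" unfolding C_def by (rule connected_component_of_subset_topspace)
  have Copen: "openin E C" unfolding C_def by (rule comp_open)
  have tsY: "topspace Y = C" unfolding Y_def using CE by auto
  have openY: "openin Y S \<longleftrightarrow> openin E S \<and> S \<subseteq> C" for S
    unfolding Y_def using Copen
    by (metis inf.absorb_iff2 openin_open_subtopology)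
  have en: "endless_surface \<Omega> Y gpt y0"
    unfolding Y_def C_def y0_def by (rule endless_of_cont[OF r oc])
  have o0X: "o0 \<in> topspace X" using u unfolding universal_endless_def endless_surface_def by blast
  obtain f where sm: "surface_morphism X p o0 Y gpt y0 f"
    using u en unfolding universal_endless_def by blast
  have cf: "continuous_map X Y f" and qf: "\<forall>x\<in>topspace X. gpt (f x) = p x" and f0: "f o0 = y0"
    and loc: "\<forall>x\<in>topspace X. \<exists>U. openin X U \<and> x \<in> U \<and> openin Y (f ` U)
            \<and> homeomorphic_map (subtopology X U) (subtopology Y (f ` U)) f"
    using sm unfolding surface_morphism_def by blast+
  define G where "G = gval \<circ> f"
  have preim: "openin X {x \<in> topspace X. f x \<in> N}" if "openin E N" "N \<subseteq> C" for N
    using cf that openY by (simp add: continuous_map_def)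
  have "holo_on_surface X p (topspace X) G"
    unfolding holo_on_surface_def
  proof (intro conjI ballI)
    show "openin X (topspace X)" by simp
    fix x assume x: "x \<in> topspace X"
    have fxC: "f x \<in> C" using cf x tsY continuous_map_image_subset_topspace by fastforce
    obtain h e where he: "e > 0" "h holomorphic_on ball (gpt (f x)) e" "f x = germ (gpt (f x)) h"
      using E_point fxC CE by blast
    have px: "gpt (f x) = p x" using qf x by blast
    define N where "N = bas h (ball (p x) e)"
    have hb: "h holomorphic_on ball (p x) e" using he px by simp
    have fxN: "f x \<in> N" unfolding N_def bas_def using he px by force
    have NC: "N \<subseteq> C" unfolding N_def C_def
      by (rule bas_in_comp[OF fxC[unfolded C_def] fxN[unfolded N_def] hb])
    have NE: "openin E N" unfolding N_def by (rule openin_bas[OF open_ball hb])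
    obtain U1 where U1: "openin X U1" "x \<in> U1" "openin Y (f ` U1)"
      "homeomorphic_map (subtopology X U1) (subtopology Y (f ` U1)) f"
      using loc x by blast
    define U0 where "U0 = U1 \<inter> {x \<in> topspace X. f x \<in> N}"
    have U0o: "openin X U0" unfolding U0_def by (rule openin_Int[OF U1(1) preim[OF NE NC]])
    have xU0: "x \<in> U0" unfolding U0_def using U1 x fxN by blast
    have U0U1: "U0 \<subseteq> U1" unfolding U0_def by blast
    have U1X: "U1 \<subseteq> topspace X" using U1(1) openin_subset by blast
    have fU1C: "f ` U1 \<subseteq> C" using U1(3) openY[of "f ` U1"] by blast
    have fU0: "f ` U0 = f ` U1 \<inter> N" unfolding U0_def using U1X by auto
    have fU0N: "f ` U0 \<subseteq> N" using fU0 by blast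
    have fU0E: "openin E (f ` U0)" unfolding fU0 using U1(3) NE openY[of "f ` U1"] by blast
    have hom1: "homeomorphic_map (subtopology X U0) (subtopology E (f ` U0)) f"
    proof -
      have "homeomorphic_map (subtopology (subtopology X U1) U0) (subtopology (subtopology Y (f ` U1)) (f ` U0)) f"
      proof (rule homeomorphic_map_subtopologies[OF U1(4)])
        have a: "topspace (subtopology X U1) \<inter> U0 = U0" using U0U1 U1X by auto
        have b: "topspace (subtopology Y (f ` U1)) \<inter> f ` U0 = f ` U0" using fU1C U0U1 tsY by auto
        show "f ` (topspace (subtopology X U1) \<inter> U0) = topspace (subtopology Y (f ` U1)) \<inter> f ` U0"
          unfolding a b ..
      qed
      moreover have "subtopology (subtopology X U1) U0 = subtopology X U0"
        using U0U1 by (simp add: subtopology_subtopology inf.absorb2)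
      moreover have "subtopology (subtopology Y (f ` U1)) (f ` U0) = subtopology E (f ` U0)"
        unfolding Y_def using fU1C fU0 by (simp add: subtopology_subtopology Int_absorb1 inf.absorb2 Int_assoc)
      ultimately show ?thesis by simp
    qed
    have imgN: "gpt ` N = ball (p x) e" unfolding N_def bas_def by (simp add: image_image)
    have hom2: "homeomorphic_map (subtopology E (f ` U0)) (top_of_set (gpt ` f ` U0)) gpt"
    proof -
      have "homeomorphic_map (subtopology (subtopology E N) (f ` U0)) (subtopology (top_of_set (ball (p x) e)) (gpt ` f ` U0)) gpt"
      proof (rule homeomorphic_map_subtopologies[OF homeo_bas[OF open_ball hb, folded N_def]])
        have NE': "N \<subseteq> topspace E" using NE openin_subset by blast
        have a: "topspace (subtopology E N) \<inter> f ` U0 = f ` U0" using fU0N NE' by auto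
        have "gpt ` f ` U0 \<subseteq> ball (p x) e" using fU0N imgN by blast
        then have b: "topspace (top_of_set (ball (p x) e)) \<inter> gpt ` f ` U0 = gpt ` f ` U0" by auto
        show "gpt ` (topspace (subtopology E N) \<inter> f ` U0) = topspace (top_of_set (ball (p x) e)) \<inter> gpt ` f ` U0"
          unfolding a b ..
      qed
      moreover have "subtopology (subtopology E N) (f ` U0) = subtopology E (f ` U0)"
        using fU0N by (simp add: subtopology_subtopology inf.absorb2)
      moreover have "subtopology (top_of_set (ball (p x) e)) (gpt ` f ` U0) = top_of_set (gpt ` f ` U0)"
      proof -
        have "gpt ` f ` U0 \<subseteq> ball (p x) e" using fU0N imgN by blast
        then have "ball (p x) e \<inter> gpt ` f ` U0 = gpt ` f ` U0" by blast
        then show ?thesis by (simp add: subtopology_subtopology)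
      qed
      ultimately show ?thesis by simp
    qed
    have pU0: "p ` U0 = gpt ` f ` U0" using qf U0U1 U1X by (force simp: image_image)
    have hom: "homeomorphic_map (subtopology X U0) (top_of_set (p ` U0)) p"
    proof -
      have "homeomorphic_map (subtopology X U0) (top_of_set (p ` U0)) (gpt \<circ> f)"
        using homeomorphic_map_compose[OF hom1 hom2] pU0 by simp
      then show ?thesis
        by (rule homeomorphic_map_eq) (use qf U0U1 U1X in auto)
    qed
    have "openin (subtopology E N) (f ` U0)"
      unfolding openin_subtopology using fU0E fU0N by blast
    then have "openin (top_of_set (ball (p x) e)) (gpt ` f ` U0)"
      using homeomorphic_map_openness[OF homeo_bas[OF open_ball hb, folded N_def]] fU0N NE openin_subset
      by (metis topspace_subtopology_subset)
    then have op: "open (p ` U0)" using pU0 openin_open_trans by force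
    have inj: "inj_on p U0"
      using homeomorphic_imp_injective_map[OF hom] U0U1 U1X by (simp add: inf.absorb2)
    have hol: "(G \<circ> inv_into U0 p) holomorphic_on p ` U0"
    proof (rule holomorphic_transform)
      show "h holomorphic_on p ` U0" using hb pU0 fU0N imgN
        by (metis holomorphic_on_subset image_mono)
      fix w assume w: "w \<in> p ` U0"
      define u where "u = inv_into U0 p w"
      have u: "u \<in> U0" "p u = w" unfolding u_def using w by (auto intro: inv_into_into f_inv_into_f)
      then have "f u \<in> N" using fU0N by blast
      then obtain v where v: "f u = germ v h" unfolding N_def bas_def by blast
      have "v = gpt (f u)" using v by simp
      also have "\<dots> = w" using qf u U0U1 U1X by auto
      finally have vw: "v = w" .
      have "(G \<circ> inv_into U0 p) w = gval (f u)" by (simp add: G_def u_def)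
      then show "h w = (G \<circ> inv_into U0 p) w" using v vw by simp
    qed
    show "\<exists>U. openin X U \<and> x \<in> U \<and> U \<subseteq> topspace X \<and> open (p ` U) \<and> inj_on p U \<and>
            homeomorphic_map (subtopology X U) (top_of_set (p ` U)) p \<and> (G \<circ> inv_into U p) holomorphic_on p ` U"
      using U0o xU0 op inj hom hol openin_subset by blast
  qed
  moreover have "same_germ X o0 G (\<phi> \<circ> p)"
  proof -
    define N0 where "N0 = bas \<phi> (ball 0 r)"
    have y0N: "y0 \<in> N0" unfolding N0_def bas_def y0_def using r by force
    have N0C: "N0 \<subseteq> C" unfolding N0_def C_def
      by (rule bas_in_comp[OF y0C[unfolded C_def] y0N[unfolded N0_def] r(2)])
    have "openin E N0" unfolding N0_def by (rule openin_bas[OF open_ball r(2)])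
    then have W: "openin X {x \<in> topspace X. f x \<in> N0}" using preim N0C by blast
    have "G x = (\<phi> \<circ> p) x" if xW: "x \<in> {x \<in> topspace X. f x \<in> N0}" for x
    proof -
      obtain v where v: "f x = germ v \<phi>" using xW unfolding N0_def bas_def by blast
      have "v = p x" using qf xW v by (metis gpt_germ mem_Collect_eq)
      then show ?thesis using v unfolding G_def by simp
    qed
    then show ?thesis unfolding same_germ_def using W o0X f0 y0N by blast
  qed
  ultimately show ?thesis by blast
qed


lemma chart_open:
  assumes "homeomorphic_map (subtopology X V) (top_of_set (p ` V)) p" "open (p ` V)"
    "openin X S" "S \<subseteq> V"
  shows "open (p ` S)"
proof -
  have "openin (subtopology X V) S"
    unfolding openin_subtopology using assms(3,4) by blast
  moreover have "S \<subseteq> topspace (subtopology X V)" using assms(3,4) openin_subset by fastforce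
  ultimately have "openin (top_of_set (p ` V)) (p ` S)"
    using homeomorphic_map_openness[OF assms(1)] by blast
  then show ?thesis using assms(2) openin_open_trans by blast
qed

lemma ii_to_i:
  assumes u: "universal_endless \<Omega> X p o0"
    and ii: "\<forall>\<Gamma>. continuous_map (top_of_set {0..1}) X \<Gamma> \<and> \<Gamma> 0 = o0 \<longrightarrow> continuable_along X p (\<phi> \<circ> p) \<Gamma>"
  shows "omega_continuable \<Omega> \<phi>"
  unfolding omega_continuable_def
proof (intro allI impI)
  fix \<gamma> assume al: "allowed_path \<Omega> \<gamma>"
  have g0: "\<gamma> 0 = 0" using al unfolding allowed_path_def by blast
  obtain \<Gamma> where \<Gamma>: "continuous_map (top_of_set {0..1}) X \<Gamma>" "\<Gamma> 0 = o0" "\<forall>t\<in>{0..1}. p (\<Gamma> t) = \<gamma> t"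
    using u al unfolding universal_endless_def endless_surface_def by blast
  obtain U F where UF: "\<forall>t\<in>{0..1}. \<Gamma> t \<in> U t \<and> holo_on_surface X p (U t) (F t)"
      "same_germ X (\<Gamma> 0) (F 0) (\<phi> \<circ> p)"
      "\<forall>t\<in>{0..1}. \<exists>\<epsilon>>0. \<forall>s\<in>{0..1}. \<bar>s - t\<bar> < \<epsilon> \<longrightarrow>
           \<Gamma> s \<in> U t \<and> same_germ X (\<Gamma> s) (F s) (F t)"
    using ii \<Gamma> unfolding continuable_along_def by blast
  have "\<forall>t\<in>{0..1}. \<exists>V. openin X V \<and> \<Gamma> t \<in> V \<and> V \<subseteq> U t \<and> open (p ` V) \<and> inj_on p V
            \<and> homeomorphic_map (subtopology X V) (top_of_set (p ` V)) p
            \<and> (F t \<circ> inv_into V p) holomorphic_on (p ` V)"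
    using UF(1) unfolding holo_on_surface_def by blast
  then obtain V where V: "\<And>t. t \<in> {0..1} \<Longrightarrow> openin X (V t) \<and> \<Gamma> t \<in> V t \<and> V t \<subseteq> U t \<and> open (p ` V t) \<and> inj_on p (V t)
            \<and> homeomorphic_map (subtopology X (V t)) (top_of_set (p ` V t)) p
            \<and> (F t \<circ> inv_into (V t) p) holomorphic_on (p ` V t)"
    by metis
  define U' where "U' t = p ` V t" for t
  define F' where "F' t = F t \<circ> inv_into (V t) p" for t
  show "continuable_along euclidean id \<phi> \<gamma>"
    unfolding continuable_along_def
  proof (intro exI[of _ U'] exI[of _ F'] conjI ballI)
    fix t :: real assume t: "t \<in> {0..1}"
    show "\<gamma> t \<in> U' t" using V[OF t] \<Gamma>(3) t unfolding U'_def by (metis image_eqI)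
    show "holo_on_surface euclidean id (U' t) (F' t)"
      unfolding holo_euclid U'_def F'_def using V[OF t] by blast
  next
    have t0: "(0::real) \<in> {0..1}" by simp
    obtain W where W: "openin X W" "\<Gamma> 0 \<in> W" "\<forall>y\<in>W. F 0 y = (\<phi> \<circ> p) y"
      using UF(2) unfolding same_germ_def by blast
    let ?O = "p ` (V 0 \<inter> W)"
    have "open ?O" by (rule chart_open[of X "V 0" p]) (use V[OF t0] W in auto)
    moreover have "\<gamma> 0 \<in> ?O" using V[OF t0] W \<Gamma>(3) t0 by (metis IntI image_eqI)
    moreover have "F' 0 z = \<phi> z" if z: "z \<in> ?O" for z
    proof -
      obtain w where w: "w \<in> V 0" "w \<in> W" "z = p w" using z by blast
      have "inv_into (V 0) p z = w" using w V[OF t0] by (simp add: inv_into_f_f)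
      then show ?thesis using W w unfolding F'_def by simp
    qed
    ultimately show "same_germ euclidean (\<gamma> 0) (F' 0) \<phi>"
      unfolding same_germ_def by auto
  next
    fix t :: real assume t: "t \<in> {0..1}"
    obtain \<epsilon>1 where e1: "\<epsilon>1 > 0" "\<forall>s\<in>{0..1}. \<bar>s - t\<bar> < \<epsilon>1 \<longrightarrow> \<Gamma> s \<in> U t \<and> same_germ X (\<Gamma> s) (F s) (F t)"
      using UF(3) t by blast
    define Q where "Q = {s \<in> topspace (top_of_set {0..1::real}). \<Gamma> s \<in> V t}"
    have "openin (top_of_set {0..1}) Q"
      unfolding Q_def using \<Gamma>(1) V[OF t] by (simp add: continuous_map_def)
    moreover have tQ: "t \<in> Q" unfolding Q_def using t V[OF t] by simp
    ultimately obtain \<epsilon>2 where e2': "\<epsilon>2 > 0" "\<forall>s\<in>{0..1}. dist s t < \<epsilon>2 \<longrightarrow> s \<in> Q"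
      unfolding openin_euclidean_subtopology_iff by blast
    then have e2: "\<epsilon>2 > 0" "\<forall>s\<in>{0..1}. dist s t < \<epsilon>2 \<longrightarrow> \<Gamma> s \<in> V t"
      unfolding Q_def by auto
    show "\<exists>\<epsilon>>0. \<forall>s\<in>{0..1}. \<bar>s - t\<bar> < \<epsilon> \<longrightarrow> \<gamma> s \<in> U' t \<and> same_germ euclidean (\<gamma> s) (F' s) (F' t)"
    proof (intro exI[of _ "min \<epsilon>1 \<epsilon>2"] conjI ballI impI)
      show "min \<epsilon>1 \<epsilon>2 > 0" using e1 e2 by simp
      fix s assume s: "s \<in> {0..1}" "\<bar>s - t\<bar> < min \<epsilon>1 \<epsilon>2"
      have sV: "\<Gamma> s \<in> V t" using e2 s by (simp add: dist_real_def)
      then show "\<gamma> s \<in> U' t" using \<Gamma>(3) s unfolding U'_def by (metis image_eqI)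
      obtain W where W: "openin X W" "\<Gamma> s \<in> W" "\<forall>y\<in>W. F s y = F t y"
        using e1 s unfolding same_germ_def by auto
      let ?O = "p ` (V s \<inter> V t \<inter> W)"
      have "open ?O" by (rule chart_open[of X "V s" p]) (use V[OF s(1)] V[OF t] W in auto)
      moreover have "\<gamma> s \<in> ?O" using V[OF s(1)] sV W \<Gamma>(3) s by (metis IntI image_eqI)
      moreover have "F' s z = F' t z" if z: "z \<in> ?O" for z
      proof -
        obtain w where w: "w \<in> V s" "w \<in> V t" "w \<in> W" "z = p w" using z by blast
        have "inv_into (V s) p z = w" "inv_into (V t) p z = w"
          using w V[OF s(1)] V[OF t] by (simp_all add: inv_into_f_f)
        then show ?thesis using W w unfolding F'_def by simp
      qed
      ultimately show "same_germ euclidean (\<gamma> s) (F' s) (F' t)"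
        unfolding same_germ_def by auto
    qed
  qed
qed

lemma iii_to_ii:
  assumes "holo_on_surface X p (topspace X) F" "same_germ X o0 F (\<phi> \<circ> p)"
  shows "\<forall>\<Gamma>. continuous_map (top_of_set {0..1}) X \<Gamma> \<and> \<Gamma> 0 = o0 \<longrightarrow> continuable_along X p (\<phi> \<circ> p) \<Gamma>"
proof (intro allI impI)
  fix \<Gamma> :: "real \<Rightarrow> 'a" assume g: "continuous_map (top_of_set {0..1}) X \<Gamma> \<and> \<Gamma> 0 = o0"
  have ts: "\<Gamma> t \<in> topspace X" if "t \<in> {0..1}" for t
    using g that continuous_map_image_subset_topspace by fastforce
  show "continuable_along X p (\<phi> \<circ> p) \<Gamma>"
    unfolding continuable_along_def
    apply (rule exI[of _ "\<lambda>_. topspace X"], rule exI[of _ "\<lambda>_. F"])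
    using assms ts g by (auto simp: same_germ_def intro!: exI[of _ 1])
qed


theorem proposition3p14:
  fixes \<Omega> :: "real \<Rightarrow> complex set" and X :: "'a topology" and p :: "'a \<Rightarrow> complex"
    and o0 :: 'a and \<phi> :: "complex \<Rightarrow> complex" and r :: real
  assumes "dfs \<Omega>"
    and "universal_endless \<Omega> X p o0"
    and "r > 0" and "\<phi> holomorphic_on ball 0 r"
  shows "(omega_continuable \<Omega> \<phi>
            \<longleftrightarrow> (\<forall>\<Gamma>. continuous_map (top_of_set {0..1}) X \<Gamma> \<and> \<Gamma> 0 = o0
                   \<longrightarrow> continuable_along X p (\<phi> \<circ> p) \<Gamma>))
       \<and> (omega_continuable \<Omega> \<phi>
            \<longleftrightarrow> (\<exists>F. holo_on_surface X p (topspace X) F \<and> same_germ X o0 F (\<phi> \<circ> p)))"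
proof -
  have 1: "omega_continuable \<Omega> \<phi> \<Longrightarrow> \<exists>F. holo_on_surface X p (topspace X) F \<and> same_germ X o0 F (\<phi> \<circ> p)"
    using i_to_iii[OF assms(2) assms(3) assms(4)] by blast
  have 2: "(\<exists>F. holo_on_surface X p (topspace X) F \<and> same_germ X o0 F (\<phi> \<circ> p)) \<Longrightarrow>
      (\<forall>\<Gamma>. continuous_map (top_of_set {0..1}) X \<Gamma> \<and> \<Gamma> 0 = o0 \<longrightarrow> continuable_along X p (\<phi> \<circ> p) \<Gamma>)"
  proof -
    assume "\<exists>F. holo_on_surface X p (topspace X) F \<and> same_germ X o0 F (\<phi> \<circ> p)"
    then obtain F where F: "holo_on_surface X p (topspace X) F" "same_germ X o0 F (\<phi> \<circ> p)" by blast
    show ?thesis by (rule iii_to_ii[OF F])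
  qed
  have 3: "(\<forall>\<Gamma>. continuous_map (top_of_set {0..1}) X \<Gamma> \<and> \<Gamma> 0 = o0 \<longrightarrow> continuable_along X p (\<phi> \<circ> p) \<Gamma>)
      \<Longrightarrow> omega_continuable \<Omega> \<phi>"
    using ii_to_i[OF assms(2)] by blast
  show ?thesis using 1 2 3 by blast
qed

end
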